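(* Let $F\in\mathbb{R}[x_1,\dots,x_n]$ be a form (homogeneous polynomial) with $F(X)>0$ for all $X\in\mathbb{T}_n=\{(x_1,\dots,x_n): x_i\ge0,\ \sum_i x_i=1\}$. Then the sequence of sets $\{\mathrm{SDS}^{(m)}(F)\}_{m\ge1}$ is positively terminating, i.e., there exists a positive integer $k$ such that every form in $\mathrm{SDS}^{(k)}(F)$ has all coefficients nonnegative.
   Context: $W_n$ is the $n\times n$ matrix with $(W_n)_{ij}=1/j$ for $i\le j$ and $0$ for $i>j$. For a permutation $[k_1\cdots k_n]$ of $1,\dots,n$, $P_{[k_1\cdots k_n]}$ is the permutation matrix with $1$ in positions $(i,k_i)$ and $0$ elsewhere, and $B_{[k_1\cdots k_n]}=P_{[k_1\cdots k_n]}W_n$; $PW_n$ denotes the set of these $n!$ matrices. For $m\ge1$, $\mathrm{SDS}^{(m)}(F)$ is the set of forms $F(B_{[\alpha_1]}B_{[\alpha_2]}\cdots B_{[\alpha_m]}X^{\mathrm{Tr}})$, $X=(x_1,\dots,x_n)$, as $B_{[\alpha_1]},\dots,B_{[\alpha_m]}$ range independently over $PW_n$. *)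

theory Defs
  imports Complex_Main "HOL-Library.Poly_Mapping" "HOL-Combinatorics.Permutations"
begin

text \<open>Real polynomials in variables x_0, x_1, ... (x_i here is x_{i+1} of the paper),
  represented as finitely supported maps from monomials (exponent vectors) to coefficients.\<close>
type_synonym mpoly = "(nat \<Rightarrow>\<^sub>0 nat) \<Rightarrow>\<^sub>0 real"

definition coeff :: "mpoly \<Rightarrow> (nat \<Rightarrow>\<^sub>0 nat) \<Rightarrow> real" where
  "coeff F m = Poly_Mapping.lookup F m"

definition mdeg :: "(nat \<Rightarrow>\<^sub>0 nat) \<Rightarrow> nat" where
  "mdeg m = (\<Sum>i\<in>Poly_Mapping.keys m. Poly_Mapping.lookup m i)"

definition in_vars :: "nat \<Rightarrow> mpoly \<Rightarrow> bool" where
  "in_vars n F \<longleftrightarrow> (\<forall>m\<in>Poly_Mapping.keys F. Poly_Mapping.keys m \<subseteq> {..<n})"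

definition is_form :: "mpoly \<Rightarrow> bool" where
  "is_form F \<longleftrightarrow> (\<exists>d. \<forall>m\<in>Poly_Mapping.keys F. mdeg m = d)"

definition eval :: "mpoly \<Rightarrow> (nat \<Rightarrow> real) \<Rightarrow> real" where
  "eval F x = (\<Sum>m\<in>Poly_Mapping.keys F. Poly_Mapping.lookup F m * (\<Prod>i\<in>Poly_Mapping.keys m. x i ^ Poly_Mapping.lookup m i))"

definition subst :: "mpoly \<Rightarrow> (nat \<Rightarrow> mpoly) \<Rightarrow> mpoly" where
  "subst F L = (\<Sum>m\<in>Poly_Mapping.keys F. Poly_Mapping.single 0 (Poly_Mapping.lookup F m) * (\<Prod>i\<in>Poly_Mapping.keys m. L i ^ Poly_Mapping.lookup m i))"

text \<open>n x n matrices as functions on indices 0..n-1\<close>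
type_synonym mat = "nat \<Rightarrow> nat \<Rightarrow> real"

definition mmult :: "nat \<Rightarrow> mat \<Rightarrow> mat \<Rightarrow> mat" where
  "mmult n A B = (\<lambda>i j. \<Sum>l<n. A i l * B l j)"

definition idm :: mat where
  "idm = (\<lambda>i j. if i = j then 1 else 0)"

definition mprod_list :: "nat \<Rightarrow> mat list \<Rightarrow> mat" where
  "mprod_list n As = foldr (mmult n) As idm"

text \<open>(W_n)_{ij} = 1/j for i <= j (1-based); 0-based: 1/(j+1) for i <= j.\<close>
definition Wmat :: "nat \<Rightarrow> mat" where
  "Wmat n = (\<lambda>i j. if i \<le> j then 1 / real (j + 1) else 0)"

definition Pmat :: "(nat \<Rightarrow> nat) \<Rightarrow> mat" where
  "Pmat k = (\<lambda>i j. if j = k i then 1 else 0)"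

definition PW :: "nat \<Rightarrow> mat set" where
  "PW n = {mmult n (Pmat k) (Wmat n) | k. k permutes {..<n}}"

definition lin_subst :: "nat \<Rightarrow> mat \<Rightarrow> nat \<Rightarrow> mpoly" where
  "lin_subst n B i = (\<Sum>j<n. Poly_Mapping.single (Poly_Mapping.single j 1) (B i j))"

definition SDS :: "nat \<Rightarrow> nat \<Rightarrow> mpoly \<Rightarrow> mpoly set" where
  "SDS n m F = {subst F (lin_subst n (mprod_list n Bs)) | Bs.
                  length Bs = m \<and> (\<forall>B\<in>set Bs. B \<in> PW n)}"

end

theory Submission
  imports Defs "HOL-Analysis.Function_Topology" "HOL-Analysis.Elementary_Metric_Spaces"
begin


lemma PW_props:
  assumes "B \<in> PW n" "n \<ge> 1"
  shows "(\<forall>i<n. \<forall>j<n. B i j \<ge> 0) \<and> (\<forall>j<n. (\<Sum>i<n. B i j) = 1) \<and> (\<exists>r<n. \<forall>j<n. B r j \<ge> 1 / real n)"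
proof -
  obtain k where k: "k permutes {..<n}" and B: "B = mmult n (Pmat k) (Wmat n)"
    using assms(1) unfolding PW_def by blast
  have kin: "\<And>i. i < n \<Longrightarrow> k i < n" using k by (metis lessThan_iff permutes_in_image)
  have Bij: "B i j = (if k i \<le> j then 1 / real (j+1) else 0)" if "i < n" for i j
  proof -
    have "B i j = (\<Sum>l<n. (if l = k i then 1 else 0) * Wmat n l j)"
      by (simp add: B mmult_def Pmat_def eq_commute)
    also have "\<dots> = (\<Sum>l<n. if l = k i then Wmat n l j else 0)"
      by (rule sum.cong) auto
    also have "\<dots> = Wmat n (k i) j"
      using kin[OF that] by simp
    finally show ?thesis by (simp add: Wmat_def)
  qed
  have nonneg: "\<forall>i<n. \<forall>j<n. B i j \<ge> 0" by (simp add: Bij)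
  have colsum: "(\<Sum>i<n. B i j) = 1" if "j < n" for j
  proof -
    have "(\<Sum>i<n. B i j) = (\<Sum>i\<in>{i. i<n \<and> k i \<le> j}. 1 / real (j+1))"
      by (simp add: Bij sum.If_cases lessThan_def Collect_conj_eq Int_commute)
    also have "card {i. i<n \<and> k i \<le> j} = j + 1"
    proof -
      have "bij_betw k {i. i<n \<and> k i \<le> j} {..j}"
      proof -
        have bk: "bij_betw k {..<n} {..<n}" using k by (simp add: permutes_imp_bij)
        have "{i. i<n \<and> k i \<le> j} = {..<n} \<inter> k -` {..j}" by auto
        moreover have "k ` ({..<n} \<inter> k -` {..j}) = {..j}"
        proof
          show "k ` ({..<n} \<inter> k -` {..j}) \<subseteq> {..j}" by auto
          show "{..j} \<subseteq> k ` ({..<n} \<inter> k -` {..j})"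
          proof
            fix y assume "y \<in> {..j}"
            then have "y \<in> {..<n}" using that by auto
            then obtain x where "x \<in> {..<n}" "k x = y" using bk by (metis bij_betw_imp_surj_on imageE)
            then show "y \<in> k ` ({..<n} \<inter> k -` {..j})" using \<open>y \<in> {..j}\<close> by auto
          qed
        qed
        ultimately show ?thesis using bk
          by (metis bij_betw_subset inf_le1 bij_betw_imp_inj_on inj_on_imp_bij_betw)
      qed
      then show ?thesis by (simp add: bij_betw_same_card)
    qed
    ultimately show ?thesis by simp
  qed
  obtain r where r: "r < n" "k r = 0"
  proof -
    have "0 \<in> k ` {..<n}" using permutes_image[OF k] assms(2) by auto
    then show ?thesis using that by auto
  qed
  have "\<forall>j<n. B r j \<ge> 1 / real n"
    using r by (auto simp: Bij intro!: divide_left_mono)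
  then show ?thesis using nonneg colsum r by blast
qed

lemma contract:
  fixes B :: mat and v :: "nat \<Rightarrow> real"
  assumes nn: "\<forall>i<n. \<forall>l<n. B i l \<ge> 0" and cs: "\<forall>l<n. (\<Sum>i<n. B i l) = 1"
    and r: "r < n" and rc: "\<forall>l<n. B r l \<ge> c" and v0: "(\<Sum>l<n. v l) = 0"
  shows "(\<Sum>i<n. \<bar>\<Sum>l<n. B i l * v l\<bar>) \<le> (1 - c) * (\<Sum>l<n. \<bar>v l\<bar>)"
proof -
  define B' where "B' i l = B i l - (if i = r then c else 0)" for i l
  have eq: "(\<Sum>l<n. B i l * v l) = (\<Sum>l<n. B' i l * v l)" for i
  proof -
    have "(\<Sum>l<n. B' i l * v l) = (\<Sum>l<n. B i l * v l) - (if i = r then c else 0) * (\<Sum>l<n. v l)"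
      by (simp add: B'_def left_diff_distrib sum_subtractf sum_distrib_left)
    then show ?thesis using v0 by simp
  qed
  have nn': "B' i l \<ge> 0" if "i < n" "l < n" for i l
    using nn rc that by (auto simp: B'_def)
  have "(\<Sum>i<n. \<bar>\<Sum>l<n. B i l * v l\<bar>) = (\<Sum>i<n. \<bar>\<Sum>l<n. B' i l * v l\<bar>)"
    using eq by simp
  also have "\<dots> \<le> (\<Sum>i<n. \<Sum>l<n. B' i l * \<bar>v l\<bar>)"
  proof (rule sum_mono)
    fix i assume "i \<in> {..<n}"
    have "\<bar>\<Sum>l<n. B' i l * v l\<bar> \<le> (\<Sum>l<n. \<bar>B' i l * v l\<bar>)" by (rule sum_abs)
    also have "\<dots> = (\<Sum>l<n. B' i l * \<bar>v l\<bar>)"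
      using nn' \<open>i \<in> {..<n}\<close> by (intro sum.cong) (auto simp: abs_mult)
    finally show "\<bar>\<Sum>l<n. B' i l * v l\<bar> \<le> (\<Sum>l<n. B' i l * \<bar>v l\<bar>)" .
  qed
  also have "\<dots> = (\<Sum>l<n. (\<Sum>i<n. B' i l) * \<bar>v l\<bar>)"
    by (subst sum.swap) (simp add: sum_distrib_right)
  also have "\<dots> = (\<Sum>l<n. (1 - c) * \<bar>v l\<bar>)"
  proof (rule sum.cong)
    fix l assume "l \<in> {..<n}"
    have "(\<Sum>i<n. B' i l) = (\<Sum>i<n. B i l) - (\<Sum>i<n. (if i = r then c else 0))"
      by (simp add: B'_def sum_subtractf)
    also have "\<dots> = 1 - c" using cs r \<open>l \<in> {..<n}\<close> by simp
    finally show "(\<Sum>i<n. B' i l) * \<bar>v l\<bar> = (1 - c) * \<bar>v l\<bar>" by simp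
  qed simp
  finally show ?thesis by (simp add: sum_distrib_left)
qed

lemma prod_props:
  assumes "\<forall>B\<in>set Bs. B \<in> PW n" "n \<ge> 1"
  shows "(\<forall>i<n. \<forall>j<n. mprod_list n Bs i j \<ge> 0) \<and> (\<forall>j<n. (\<Sum>i<n. mprod_list n Bs i j) = 1)
     \<and> (\<forall>j<n. \<forall>j'<n. (\<Sum>i<n. \<bar>mprod_list n Bs i j - mprod_list n Bs i j'\<bar>) \<le> 2 * (1 - 1 / real n) ^ length Bs)"
  using assms(1)
proof (induction Bs)
  case Nil
  have "(\<Sum>i<n. \<bar>idm i j - idm i j'\<bar>) \<le> 2" if "j < n" "j' < n" for j j'
  proof -
    have "(\<Sum>i<n. \<bar>idm i j - idm i j'\<bar>) \<le> (\<Sum>i<n. idm i j + idm i j')"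
      by (intro sum_mono) (auto simp: idm_def)
    also have "\<dots> = 2" using that by (simp add: sum.distrib idm_def)
    finally show ?thesis .
  qed
  then show ?case by (simp add: mprod_list_def idm_def)
next
  case (Cons B Bs)
  define N where "N = mprod_list n Bs"
  have IH: "(\<forall>i<n. \<forall>j<n. N i j \<ge> 0) \<and> (\<forall>j<n. (\<Sum>i<n. N i j) = 1)
     \<and> (\<forall>j<n. \<forall>j'<n. (\<Sum>i<n. \<bar>N i j - N i j'\<bar>) \<le> 2 * (1 - 1 / real n) ^ length Bs)"
    using Cons by (simp add: N_def)
  have PB: "(\<forall>i<n. \<forall>j<n. B i j \<ge> 0) \<and> (\<forall>j<n. (\<Sum>i<n. B i j) = 1) \<and> (\<exists>r<n. \<forall>j<n. B r j \<ge> 1 / real n)"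
    using PW_props[of B n] Cons.prems assms(2) by simp
  then obtain r where r: "r < n" "\<forall>j<n. B r j \<ge> 1 / real n" by blast
  have M: "mprod_list n (B # Bs) = mmult n B N" by (simp add: mprod_list_def N_def)
  have Mij: "mprod_list n (B # Bs) i j = (\<Sum>l<n. B i l * N l j)" for i j
    by (simp add: M mmult_def)
  have nn: "\<forall>i<n. \<forall>j<n. mprod_list n (B # Bs) i j \<ge> 0"
    using IH PB by (auto simp: Mij intro!: sum_nonneg)
  have cs: "(\<Sum>i<n. mprod_list n (B # Bs) i j) = 1" if "j < n" for j
  proof -
    have "(\<Sum>i<n. mprod_list n (B # Bs) i j) = (\<Sum>l<n. (\<Sum>i<n. B i l) * N l j)"
      by (simp add: Mij sum_distrib_right) (rule sum.swap)
    also have "\<dots> = (\<Sum>l<n. N l j)" using PB by simp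
    finally show ?thesis using IH that by simp
  qed
  have cd: "(\<Sum>i<n. \<bar>mprod_list n (B # Bs) i j - mprod_list n (B # Bs) i j'\<bar>) \<le> 2 * (1 - 1 / real n) ^ length (B # Bs)"
    if "j < n" "j' < n" for j j'
  proof -
    define v where "v l = N l j - N l j'" for l
    have v0: "(\<Sum>l<n. v l) = 0" using IH that by (simp add: v_def sum_subtractf)
    have "(\<Sum>i<n. \<bar>mprod_list n (B # Bs) i j - mprod_list n (B # Bs) i j'\<bar>) = (\<Sum>i<n. \<bar>\<Sum>l<n. B i l * v l\<bar>)"
      by (simp add: Mij v_def right_diff_distrib sum_subtractf)
    also have "\<dots> \<le> (1 - 1 / real n) * (\<Sum>l<n. \<bar>v l\<bar>)"
      using contract[of n B r "1 / real n" v] PB r v0 by simp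
    also have "\<dots> \<le> (1 - 1 / real n) * (2 * (1 - 1 / real n) ^ length Bs)"
      using IH that assms(2) by (intro mult_left_mono) (auto simp: v_def)
    finally show ?thesis by simp
  qed
  show ?case using nn cs cd by blast
qed



definition norm1 :: "mpoly \<Rightarrow> real" where
  "norm1 P = (\<Sum>m\<in>Poly_Mapping.keys P. \<bar>Poly_Mapping.lookup P m\<bar>)"

lemma norm1_superset:
  assumes "finite A" "Poly_Mapping.keys P \<subseteq> A"
  shows "norm1 P = (\<Sum>m\<in>A. \<bar>Poly_Mapping.lookup P m\<bar>)"
  unfolding norm1_def
  by (rule sum.mono_neutral_left) (use assms in \<open>auto simp: in_keys_iff\<close>)

lemma norm1_nonneg: "norm1 P \<ge> 0"
  unfolding norm1_def by (simp add: sum_nonneg)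

lemma lookup_le_norm1: "\<bar>Poly_Mapping.lookup P m\<bar> \<le> norm1 P"
proof (cases "m \<in> Poly_Mapping.keys P")
  case True
  then show ?thesis unfolding norm1_def
    by (intro member_le_sum) auto
next
  case False
  then show ?thesis by (simp add: in_keys_iff norm1_nonneg)
qed

lemma norm1_add: "norm1 (P + Q) \<le> norm1 P + norm1 Q"
proof -
  let ?A = "Poly_Mapping.keys P \<union> Poly_Mapping.keys Q"
  have f: "finite ?A" by simp
  have "norm1 (P + Q) = (\<Sum>m\<in>?A. \<bar>Poly_Mapping.lookup (P + Q) m\<bar>)"
    by (rule norm1_superset[OF f]) (rule keys_add)
  also have "\<dots> \<le> (\<Sum>m\<in>?A. \<bar>Poly_Mapping.lookup P m\<bar> + \<bar>Poly_Mapping.lookup Q m\<bar>)"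
    by (intro sum_mono) (simp add: lookup_add abs_triangle_ineq)
  also have "\<dots> = norm1 P + norm1 Q"
    by (simp add: sum.distrib norm1_superset[OF f])
  finally show ?thesis .
qed

lemma norm1_sum: "norm1 (sum f I) \<le> (\<Sum>i\<in>I. norm1 (f i))"
proof (induction I rule: infinite_finite_induct)
  case (infinite A)
  then show ?case by (simp add: norm1_def)
next
  case empty
  then show ?case by (simp add: norm1_def)
next
  case (insert x F)
  then show ?case using norm1_add[of "f x" "sum f F"] by simp
qed

lemma norm1_single: "norm1 (Poly_Mapping.single a c) = \<bar>c\<bar>"
  by (cases "c = 0") (auto simp: norm1_def)

lemma poly_decomp: "P = (\<Sum>a\<in>Poly_Mapping.keys P. Poly_Mapping.single a (Poly_Mapping.lookup P a))"
proof (rule poly_mapping_eqI)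
  fix x
  show "Poly_Mapping.lookup P x = Poly_Mapping.lookup (\<Sum>a\<in>Poly_Mapping.keys P. Poly_Mapping.single a (Poly_Mapping.lookup P a)) x"
    by (auto simp: lookup_sum lookup_single when_def in_keys_iff)
qed

lemma mult_decomp: "(P::mpoly) * Q = (\<Sum>a\<in>Poly_Mapping.keys P. \<Sum>b\<in>Poly_Mapping.keys Q.
    Poly_Mapping.single (a + b) (Poly_Mapping.lookup P a * Poly_Mapping.lookup Q b))"
proof -
  have "P * Q = (\<Sum>a\<in>Poly_Mapping.keys P. Poly_Mapping.single a (Poly_Mapping.lookup P a)) *
      (\<Sum>b\<in>Poly_Mapping.keys Q. Poly_Mapping.single b (Poly_Mapping.lookup Q b))"
    using poly_decomp[of P] poly_decomp[of Q] by simp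
  then show ?thesis by (simp add: sum_product mult_single)
qed

lemma norm1_mult: "norm1 ((P::mpoly) * Q) \<le> norm1 P * norm1 Q"
proof -
  have "norm1 (P * Q) \<le> (\<Sum>a\<in>Poly_Mapping.keys P. norm1 (\<Sum>b\<in>Poly_Mapping.keys Q.
    Poly_Mapping.single (a + b) (Poly_Mapping.lookup P a * Poly_Mapping.lookup Q b)))"
    by (subst mult_decomp) (rule norm1_sum)
  also have "\<dots> \<le> (\<Sum>a\<in>Poly_Mapping.keys P. \<Sum>b\<in>Poly_Mapping.keys Q.
      \<bar>Poly_Mapping.lookup P a\<bar> * \<bar>Poly_Mapping.lookup Q b\<bar>)"
    by (intro sum_mono order.trans[OF norm1_sum]) (simp add: norm1_single abs_mult)
  also have "\<dots> = norm1 P * norm1 Q"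
    by (simp add: norm1_def sum_product)
  finally show ?thesis .
qed

lemma norm1_one: "norm1 (1::mpoly) = 1"
  using norm1_single[of 0 "1::real"] by simp

lemma norm1_minus: "norm1 (- P) = norm1 P"
  by (simp add: norm1_def)

lemma norm1_power: "norm1 ((P::mpoly) ^ k) \<le> norm1 P ^ k"
proof (induction k)
  case 0
  then show ?case by (simp add: norm1_one)
next
  case (Suc k)
  have "norm1 (P ^ Suc k) \<le> norm1 P * norm1 (P ^ k)" by (simp add: norm1_mult)
  also have "\<dots> \<le> norm1 P * norm1 P ^ k"
    by (intro mult_left_mono Suc norm1_nonneg)
  finally show ?case by simp
qed

lemma norm1_add_mult: "norm1 ((a::mpoly) * b + c * d) \<le> norm1 a * norm1 b + norm1 c * norm1 d"
  by (rule order.trans[OF norm1_add add_mono[OF norm1_mult norm1_mult]])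

lemma norm1_power_diff:
  fixes X Y :: mpoly
  assumes "norm1 X \<le> A" "norm1 Y \<le> A" "norm1 (X - Y) \<le> e" "1 \<le> A"
  shows "norm1 (X ^ k - Y ^ k) \<le> real k * A ^ k * e"
proof (induction k)
  case 0
  then show ?case by (simp add: norm1_def)
next
  case (Suc k)
  have e0: "e \<ge> 0" using assms(3) norm1_nonneg order.trans by blast
  have "X ^ Suc k - Y ^ Suc k = X * (X ^ k - Y ^ k) + (X - Y) * Y ^ k"
    by (simp add: algebra_simps)
  then have "norm1 (X ^ Suc k - Y ^ Suc k) \<le> norm1 X * norm1 (X ^ k - Y ^ k) + norm1 (X - Y) * norm1 (Y ^ k)"
    using norm1_add_mult by simp
  also have "\<dots> \<le> A * (real k * A ^ k * e) + e * A ^ k"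
  proof (rule add_mono)
    have A0: "A \<ge> 0" using assms(4) by simp
    show "norm1 X * norm1 (X ^ k - Y ^ k) \<le> A * (real k * A ^ k * e)"
      by (rule mult_mono[OF assms(1) Suc A0 norm1_nonneg])
    have "norm1 (Y ^ k) \<le> A ^ k"
      using norm1_power[of Y k] power_mono[OF assms(2) norm1_nonneg, of k] by linarith
    then show "norm1 (X - Y) * norm1 (Y ^ k) \<le> e * A ^ k"
      by (rule mult_mono[OF assms(3)]) (use e0 norm1_nonneg in auto)
  qed
  also have "\<dots> \<le> A * (real k * A ^ k * e) + e * A ^ Suc k"
    using e0 assms(4) by (intro add_left_mono mult_left_mono) (auto simp: power_increasing)
  finally show ?case by (simp add: algebra_simps)
qed

lemma norm1_prod_diff:
  fixes X Y :: "nat \<Rightarrow> mpoly"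
  assumes "finite S" "\<forall>i\<in>S. norm1 (X i) \<le> A \<and> norm1 (Y i) \<le> A \<and> norm1 (X i - Y i) \<le> e" "1 \<le> A"
  shows "norm1 ((\<Prod>i\<in>S. X i ^ f i) - (\<Prod>i\<in>S. Y i ^ f i)) \<le> real (\<Sum>i\<in>S. f i) * A ^ (\<Sum>i\<in>S. f i) * e
     \<and> norm1 (\<Prod>i\<in>S. Y i ^ f i) \<le> A ^ (\<Sum>i\<in>S. f i)"
  using assms(1,2)
proof (induction S rule: finite_induct)
  case empty
  then show ?case by (simp add: norm1_def)
next
  case (insert x S)
  let ?E = "\<Sum>i\<in>S. f i"
  let ?PX = "\<Prod>i\<in>S. X i ^ f i" and ?PY = "\<Prod>i\<in>S. Y i ^ f i"
  have IH: "norm1 (?PX - ?PY) \<le> real ?E * A ^ ?E * e" "norm1 ?PY \<le> A ^ ?E" using insert by auto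
  have hx: "norm1 (X x) \<le> A" "norm1 (Y x) \<le> A" "norm1 (X x - Y x) \<le> e" using insert by auto
  have e0: "e \<ge> 0" using hx(3) norm1_nonneg order.trans by blast
  have XA: "norm1 (X x ^ f x) \<le> A ^ f x"
    using norm1_power[of "X x" "f x"] power_mono[OF hx(1) norm1_nonneg, of "f x"] by linarith
  have YA: "norm1 (Y x ^ f x) \<le> A ^ f x"
    using norm1_power[of "Y x" "f x"] power_mono[OF hx(2) norm1_nonneg, of "f x"] by linarith
  have D: "norm1 (X x ^ f x - Y x ^ f x) \<le> real (f x) * A ^ f x * e"
    by (rule norm1_power_diff[OF hx assms(3)])
  have eq: "X x ^ f x * ?PX - Y x ^ f x * ?PY = X x ^ f x * (?PX - ?PY) + (X x ^ f x - Y x ^ f x) * ?PY"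
    by (simp add: algebra_simps)
  have "norm1 (X x ^ f x * ?PX - Y x ^ f x * ?PY) \<le> norm1 (X x ^ f x) * norm1 (?PX - ?PY) + norm1 (X x ^ f x - Y x ^ f x) * norm1 ?PY"
    unfolding eq by (rule norm1_add_mult)
  also have "\<dots> \<le> A ^ f x * (real ?E * A ^ ?E * e) + (real (f x) * A ^ f x * e) * A ^ ?E"
    using e0 assms(3) by (intro add_mono mult_mono XA IH D norm1_nonneg) auto
  also have "\<dots> = real (f x + ?E) * A ^ (f x + ?E) * e"
    by (simp add: algebra_simps power_add)
  finally have 1: "norm1 (X x ^ f x * ?PX - Y x ^ f x * ?PY) \<le> real (f x + ?E) * A ^ (f x + ?E) * e" .
  have "norm1 (Y x ^ f x * ?PY) \<le> A ^ f x * A ^ ?E"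
    using assms(3) by (intro order.trans[OF norm1_mult] mult_mono YA IH norm1_nonneg) auto
  then show ?case using 1 insert by (simp add: power_add)
qed

fun Dset :: "nat \<Rightarrow> nat \<Rightarrow> (nat \<Rightarrow>\<^sub>0 nat) set" where
  "Dset n 0 = {0}"
| "Dset n (Suc d) = {Poly_Mapping.single j 1 + a | j a. j < n \<and> a \<in> Dset n d}"

lemma Dset_add: "a \<in> Dset n d \<Longrightarrow> b \<in> Dset n e \<Longrightarrow> a + b \<in> Dset n (d + e)"
proof (induction d arbitrary: a)
  case 0
  then show ?case by simp
next
  case (Suc d)
  then obtain j a' where "j < n" "a' \<in> Dset n d" "a = Poly_Mapping.single j 1 + a'" by auto
  moreover have "a' + b \<in> Dset n (d + e)" using Suc.IH[OF \<open>a' \<in> Dset n d\<close>] Suc.prems(2) .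
  ultimately show ?case by (auto simp: add.assoc)
qed

lemma keys_mult_D:
  assumes "Poly_Mapping.keys (P::mpoly) \<subseteq> Dset n d" "Poly_Mapping.keys Q \<subseteq> Dset n e"
  shows "Poly_Mapping.keys (P * Q) \<subseteq> Dset n (d + e)"
  using keys_mult[of P Q] assms Dset_add by blast

lemma keys_power_D:
  assumes "Poly_Mapping.keys (P::mpoly) \<subseteq> Dset n 1"
  shows "Poly_Mapping.keys (P ^ k) \<subseteq> Dset n k"
proof (induction k)
  case 0
  then show ?case by simp
next
  case (Suc k)
  then show ?case using keys_mult_D[OF assms Suc] by simp
qed

lemma keys_prod_D:
  assumes "finite S" "\<forall>i\<in>S. Poly_Mapping.keys (X i :: mpoly) \<subseteq> Dset n 1"
  shows "Poly_Mapping.keys (\<Prod>i\<in>S. X i ^ f i) \<subseteq> Dset n (\<Sum>i\<in>S. f i)"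
  using assms
proof (induction S rule: finite_induct)
  case empty
  then show ?case by simp
next
  case (insert x S)
  then show ?case using keys_mult_D[OF keys_power_D[of "X x" n "f x"]] by simp
qed

lemma single_eq_single_1: "(Poly_Mapping.single (j::nat) (1::nat) = Poly_Mapping.single j' 1) \<longleftrightarrow> j = j'"
proof
  assume "Poly_Mapping.single j (1::nat) = Poly_Mapping.single j' 1"
  then have "Poly_Mapping.lookup (Poly_Mapping.single j (1::nat)) j = Poly_Mapping.lookup (Poly_Mapping.single j' 1) j" by simp
  then show "j = j'" by (auto simp: lookup_single when_def split: if_splits)
qed simp

lemma Dset_1: "Dset n (Suc 0) = {Poly_Mapping.single j 1 | j. j < n}"
  by auto

lemma keys_lin_subst: "Poly_Mapping.keys (lin_subst n M i) \<subseteq> Dset n 1"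
proof -
  have "Poly_Mapping.keys (lin_subst n M i) \<subseteq> (\<Union>j\<in>{..<n}. Poly_Mapping.keys (Poly_Mapping.single (Poly_Mapping.single j 1) (M i j)))"
    unfolding lin_subst_def by (rule keys_sum)
  also have "\<dots> \<subseteq> Dset n 1" unfolding One_nat_def Dset_1 by auto
  finally show ?thesis .
qed

lemma keys_single0_mult: "Poly_Mapping.keys (Poly_Mapping.single 0 c * (P::mpoly)) \<subseteq> Poly_Mapping.keys P"
  using keys_mult[of "Poly_Mapping.single 0 c" P] by (auto split: if_splits)

lemma keys_subst_D:
  assumes "in_vars n F" "\<forall>\<beta>\<in>Poly_Mapping.keys F. mdeg \<beta> = d"
  shows "Poly_Mapping.keys (subst F (lin_subst n M)) \<subseteq> Dset n d"
proof -
  have "Poly_Mapping.keys (subst F (lin_subst n M)) \<subseteq> (\<Union>\<beta>\<in>Poly_Mapping.keys F.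
     Poly_Mapping.keys (Poly_Mapping.single 0 (Poly_Mapping.lookup F \<beta>) * (\<Prod>i\<in>Poly_Mapping.keys \<beta>. lin_subst n M i ^ Poly_Mapping.lookup \<beta> i)))"
    unfolding subst_def by (rule keys_sum)
  also have "\<dots> \<subseteq> Dset n d"
  proof (rule UN_least)
    fix \<beta> assume b: "\<beta> \<in> Poly_Mapping.keys F"
    have "Poly_Mapping.keys (\<Prod>i\<in>Poly_Mapping.keys \<beta>. lin_subst n M i ^ Poly_Mapping.lookup \<beta> i) \<subseteq> Dset n (mdeg \<beta>)"
      unfolding mdeg_def by (rule keys_prod_D) (simp, intro ballI keys_lin_subst)
    then show "Poly_Mapping.keys (Poly_Mapping.single 0 (Poly_Mapping.lookup F \<beta>) * (\<Prod>i\<in>Poly_Mapping.keys \<beta>. lin_subst n M i ^ Poly_Mapping.lookup \<beta> i)) \<subseteq> Dset n d"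
      using keys_single0_mult assms(2) b by fastforce
  qed
  finally show ?thesis .
qed

definition nonnegp :: "mpoly \<Rightarrow> bool" where
  "nonnegp P \<longleftrightarrow> (\<forall>x. Poly_Mapping.lookup P x \<ge> 0)"

lemma lookup_mult_eq: "Poly_Mapping.lookup ((P::mpoly) * Q) x = (\<Sum>a\<in>Poly_Mapping.keys P. \<Sum>b\<in>Poly_Mapping.keys Q.
    (if a + b = x then Poly_Mapping.lookup P a * Poly_Mapping.lookup Q b else 0))"
  by (subst mult_decomp) (simp add: lookup_sum lookup_single when_def)

lemma nonnegp_mult: "nonnegp P \<Longrightarrow> nonnegp Q \<Longrightarrow> nonnegp (P * Q)"
  unfolding nonnegp_def lookup_mult_eq by (auto intro!: sum_nonneg)

lemma nonnegp_one: "nonnegp 1"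
  by (simp flip: single_one add: nonnegp_def lookup_single when_def)

lemma nonnegp_power: "nonnegp P \<Longrightarrow> nonnegp (P ^ k)"
  by (induction k) (auto simp: nonnegp_mult nonnegp_one)

lemma lookup_mult_ge:
  assumes "nonnegp P" "nonnegp Q"
  shows "Poly_Mapping.lookup ((P::mpoly) * Q) (a + b) \<ge> Poly_Mapping.lookup P a * Poly_Mapping.lookup Q b"
proof (cases "a \<in> Poly_Mapping.keys P \<and> b \<in> Poly_Mapping.keys Q")
  case True
  let ?t = "\<lambda>a' b'. (if a' + b' = a + b then Poly_Mapping.lookup P a' * Poly_Mapping.lookup Q b' else 0)"
  have nn: "\<And>a' b'. ?t a' b' \<ge> 0" using assms by (auto simp: nonnegp_def)
  have "Poly_Mapping.lookup P a * Poly_Mapping.lookup Q b = ?t a b" by simp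
  also have "\<dots> \<le> (\<Sum>b'\<in>Poly_Mapping.keys Q. ?t a b')"
    using True nn by (intro member_le_sum) auto
  also have "\<dots> \<le> (\<Sum>a'\<in>Poly_Mapping.keys P. \<Sum>b'\<in>Poly_Mapping.keys Q. ?t a' b')"
    using True nn by (intro member_le_sum sum_nonneg) auto
  finally show ?thesis by (simp add: lookup_mult_eq)
next
  case False
  then have "Poly_Mapping.lookup P a * Poly_Mapping.lookup Q b = 0" by (auto simp: in_keys_iff)
  moreover have "Poly_Mapping.lookup (P * Q) (a + b) \<ge> 0" using nonnegp_mult[OF assms] by (simp add: nonnegp_def)
  ultimately show ?thesis by linarith
qed

definition sv :: "nat \<Rightarrow> mpoly" where
  "sv n = (\<Sum>j<n. Poly_Mapping.single (Poly_Mapping.single j 1) 1)"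

lemma nonnegp_sv: "nonnegp (sv n)"
  by (auto simp: nonnegp_def sv_def lookup_sum lookup_single when_def intro!: sum_nonneg)

lemma lookup_sv: "j < n \<Longrightarrow> Poly_Mapping.lookup (sv n) (Poly_Mapping.single j 1) = 1"
  unfolding sv_def lookup_sum lookup_single when_def single_eq_single_1 by simp

lemma lookup_sv_power: "\<alpha> \<in> Dset n d \<Longrightarrow> Poly_Mapping.lookup (sv n ^ d) \<alpha> \<ge> 1"
proof (induction d arbitrary: \<alpha>)
  case 0
  then show ?case by simp
next
  case (Suc d)
  then obtain j a where ja: "j < n" "a \<in> Dset n d" "\<alpha> = Poly_Mapping.single j 1 + a" by auto
  have "1 \<le> Poly_Mapping.lookup (sv n) (Poly_Mapping.single j 1) * Poly_Mapping.lookup (sv n ^ d) a"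
    using Suc.IH[OF ja(2)] lookup_sv[OF ja(1)] by simp
  also have "\<dots> \<le> Poly_Mapping.lookup (sv n * sv n ^ d) \<alpha>"
    unfolding ja(3) by (rule lookup_mult_ge[OF nonnegp_sv nonnegp_power[OF nonnegp_sv]])
  finally show ?case by simp
qed

lemma lookup_single0_mult: "Poly_Mapping.lookup (Poly_Mapping.single 0 c * (P::mpoly)) x = c * Poly_Mapping.lookup P x"
proof -
  have "Poly_Mapping.single 0 c * P = (\<Sum>b\<in>Poly_Mapping.keys P. Poly_Mapping.single b (c * Poly_Mapping.lookup P b))"
    by (subst poly_decomp[of P]) (simp add: sum_distrib_left mult_single)
  then show ?thesis by (auto simp: lookup_sum lookup_single when_def in_keys_iff)
qed

lemma single0_power: "(Poly_Mapping.single 0 a :: mpoly) ^ e = Poly_Mapping.single 0 (a ^ e)"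
  by (induction e) (simp_all add: mult_single)

lemma single0_prod: "(\<Prod>i\<in>S. Poly_Mapping.single 0 (g i) :: mpoly) = Poly_Mapping.single 0 (\<Prod>i\<in>S. g i)"
  by (induction S rule: infinite_finite_induct) (simp_all add: mult_single)

lemma single0_sum: "(\<Sum>i\<in>S. Poly_Mapping.single 0 (g i) :: mpoly) = Poly_Mapping.single 0 (\<Sum>i\<in>S. g i)"
  by (induction S rule: infinite_finite_induct) (simp_all add: single_add)

lemma lin_subst_rank1: "lin_subst n (\<lambda>i j. p i) i = Poly_Mapping.single 0 (p i) * sv n"
  by (simp add: lin_subst_def sv_def sum_distrib_left mult_single)

lemma subst_rank1:
  assumes "\<forall>\<beta>\<in>Poly_Mapping.keys F. mdeg \<beta> = d"
  shows "subst F (lin_subst n (\<lambda>i j. p i)) = Poly_Mapping.single 0 (eval F p) * sv n ^ d"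
proof -
  have "subst F (lin_subst n (\<lambda>i j. p i)) = (\<Sum>\<beta>\<in>Poly_Mapping.keys F.
     Poly_Mapping.single 0 (Poly_Mapping.lookup F \<beta> * (\<Prod>i\<in>Poly_Mapping.keys \<beta>. p i ^ Poly_Mapping.lookup \<beta> i)) * sv n ^ d)"
    unfolding subst_def
  proof (rule sum.cong[OF refl])
    fix \<beta> assume b: "\<beta> \<in> Poly_Mapping.keys F"
    have "(\<Prod>i\<in>Poly_Mapping.keys \<beta>. lin_subst n (\<lambda>i j. p i) i ^ Poly_Mapping.lookup \<beta> i)
        = (\<Prod>i\<in>Poly_Mapping.keys \<beta>. Poly_Mapping.single 0 (p i ^ Poly_Mapping.lookup \<beta> i) * sv n ^ Poly_Mapping.lookup \<beta> i)"
      by (simp add: lin_subst_rank1 power_mult_distrib single0_power)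
    also have "\<dots> = Poly_Mapping.single 0 (\<Prod>i\<in>Poly_Mapping.keys \<beta>. p i ^ Poly_Mapping.lookup \<beta> i) * sv n ^ mdeg \<beta>"
      by (simp add: prod.distrib single0_prod power_sum mdeg_def)
    finally show "Poly_Mapping.single 0 (Poly_Mapping.lookup F \<beta>) * (\<Prod>i\<in>Poly_Mapping.keys \<beta>. lin_subst n (\<lambda>i j. p i) i ^ Poly_Mapping.lookup \<beta> i)
      = Poly_Mapping.single 0 (Poly_Mapping.lookup F \<beta> * (\<Prod>i\<in>Poly_Mapping.keys \<beta>. p i ^ Poly_Mapping.lookup \<beta> i)) * sv n ^ d"
      using assms b by (simp add: mult_single mult.assoc)
  qed
  also have "\<dots> = Poly_Mapping.single 0 (eval F p) * sv n ^ d"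
    by (simp add: sum_distrib_right[symmetric] single0_sum eval_def)
  finally show ?thesis .
qed

lemma norm1_lin_subst: "norm1 (lin_subst n M i) \<le> (\<Sum>j<n. \<bar>M i j\<bar>)"
  unfolding lin_subst_def using norm1_sum norm1_single by (metis (no_types, lifting) sum.cong)

lemma lin_subst_diff: "lin_subst n M i - lin_subst n R i = lin_subst n (\<lambda>i j. M i j - R i j) i"
  by (simp add: lin_subst_def sum_subtractf single_diff)

lemma subst_diff: "subst F L - subst F L' = (\<Sum>\<beta>\<in>Poly_Mapping.keys F. Poly_Mapping.single 0 (Poly_Mapping.lookup F \<beta>) *
   ((\<Prod>i\<in>Poly_Mapping.keys \<beta>. L i ^ Poly_Mapping.lookup \<beta> i) - (\<Prod>i\<in>Poly_Mapping.keys \<beta>. L' i ^ Poly_Mapping.lookup \<beta> i)))"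
  by (simp add: subst_def sum_subtractf right_diff_distrib)

lemma main_poly:
  assumes iv: "in_vars n F" and deg: "\<forall>\<beta>\<in>Poly_Mapping.keys F. mdeg \<beta> = d" and n1: "n \<ge> 1"
    and M01: "\<forall>i<n. \<forall>j<n. 0 \<le> M i j \<and> M i j \<le> 1"
    and p01: "\<forall>i<n. 0 \<le> p i \<and> p i \<le> 1"
    and Mp: "\<forall>i<n. \<forall>j<n. \<bar>M i j - p i\<bar> \<le> \<eta>"
    and mu: "eval F p \<ge> \<mu>"
    and small: "(\<Sum>\<beta>\<in>Poly_Mapping.keys F. \<bar>Poly_Mapping.lookup F \<beta>\<bar>) * (real d * real n ^ d) * (real n * \<eta>) \<le> \<mu>"
  shows "Poly_Mapping.lookup (subst F (lin_subst n M)) \<alpha> \<ge> 0"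
proof -
  define G where "G = subst F (lin_subst n M)"
  define G' where "G' = subst F (lin_subst n (\<lambda>i j. p i))"
  define L where "L = lin_subst n M"
  define L' where "L' = lin_subst n (\<lambda>i j. p i)"
  have eta0: "\<eta> \<ge> 0" using Mp n1 by (meson abs_ge_zero less_le_trans order.trans zero_less_one le_less)
  have A1: "1 \<le> real n" using n1 by simp
  have bnd: "norm1 (L i) \<le> real n \<and> norm1 (L' i) \<le> real n \<and> norm1 (L i - L' i) \<le> real n * \<eta>" if "i < n" for i
  proof (intro conjI)
    have "norm1 (L i) \<le> (\<Sum>j<n. \<bar>M i j\<bar>)" unfolding L_def by (rule norm1_lin_subst)
    also have "\<dots> \<le> (\<Sum>j<n. 1)" using M01 that by (intro sum_mono) auto
    finally show "norm1 (L i) \<le> real n" by simp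
    have "norm1 (L' i) \<le> (\<Sum>j<n. \<bar>p i\<bar>)" unfolding L'_def by (rule norm1_lin_subst)
    also have "\<dots> \<le> (\<Sum>j<n. 1)" using p01 that by (intro sum_mono) auto
    finally show "norm1 (L' i) \<le> real n" by simp
    have "norm1 (L i - L' i) \<le> (\<Sum>j<n. \<bar>M i j - p i\<bar>)" unfolding L_def L'_def lin_subst_diff by (rule norm1_lin_subst)
    also have "\<dots> \<le> (\<Sum>j<n. \<eta>)" using Mp that by (intro sum_mono) auto
    finally show "norm1 (L i - L' i) \<le> real n * \<eta>" by simp
  qed
  define C where "C = (\<Sum>\<beta>\<in>Poly_Mapping.keys F. \<bar>Poly_Mapping.lookup F \<beta>\<bar>) * (real d * real n ^ d) * (real n * \<eta>)"
  have C0: "C \<ge> 0" unfolding C_def using eta0 by (intro mult_nonneg_nonneg sum_nonneg) auto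
  have nG: "norm1 (G - G') \<le> C"
  proof -
    have "norm1 (G - G') \<le> (\<Sum>\<beta>\<in>Poly_Mapping.keys F. norm1 (Poly_Mapping.single 0 (Poly_Mapping.lookup F \<beta>) *
      ((\<Prod>i\<in>Poly_Mapping.keys \<beta>. L i ^ Poly_Mapping.lookup \<beta> i) - (\<Prod>i\<in>Poly_Mapping.keys \<beta>. L' i ^ Poly_Mapping.lookup \<beta> i))))"
      unfolding G_def G'_def L_def L'_def subst_diff by (rule norm1_sum)
    also have "\<dots> \<le> (\<Sum>\<beta>\<in>Poly_Mapping.keys F. \<bar>Poly_Mapping.lookup F \<beta>\<bar> * ((real d * real n ^ d) * (real n * \<eta>)))"
    proof (rule sum_mono)
      fix \<beta> assume b: "\<beta> \<in> Poly_Mapping.keys F"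
      have kb: "Poly_Mapping.keys \<beta> \<subseteq> {..<n}" using iv b by (auto simp: in_vars_def)
      have "norm1 ((\<Prod>i\<in>Poly_Mapping.keys \<beta>. L i ^ Poly_Mapping.lookup \<beta> i) - (\<Prod>i\<in>Poly_Mapping.keys \<beta>. L' i ^ Poly_Mapping.lookup \<beta> i))
          \<le> real (\<Sum>i\<in>Poly_Mapping.keys \<beta>. Poly_Mapping.lookup \<beta> i) * real n ^ (\<Sum>i\<in>Poly_Mapping.keys \<beta>. Poly_Mapping.lookup \<beta> i) * (real n * \<eta>)"
        using norm1_prod_diff[of "Poly_Mapping.keys \<beta>" L "real n" L' "real n * \<eta>" "Poly_Mapping.lookup \<beta>"] bnd kb A1 by auto
      also have "\<dots> = real d * real n ^ d * (real n * \<eta>)" using deg b by (simp add: mdeg_def)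
      finally have "norm1 ((\<Prod>i\<in>Poly_Mapping.keys \<beta>. L i ^ Poly_Mapping.lookup \<beta> i) - (\<Prod>i\<in>Poly_Mapping.keys \<beta>. L' i ^ Poly_Mapping.lookup \<beta> i))
          \<le> real d * real n ^ d * (real n * \<eta>)" .
      then show "norm1 (Poly_Mapping.single 0 (Poly_Mapping.lookup F \<beta>) *
      ((\<Prod>i\<in>Poly_Mapping.keys \<beta>. L i ^ Poly_Mapping.lookup \<beta> i) - (\<Prod>i\<in>Poly_Mapping.keys \<beta>. L' i ^ Poly_Mapping.lookup \<beta> i)))
        \<le> \<bar>Poly_Mapping.lookup F \<beta>\<bar> * ((real d * real n ^ d) * (real n * \<eta>))"
        by (intro order.trans[OF norm1_mult]) (simp add: norm1_single mult_left_mono)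
    qed
    also have "\<dots> = C" by (simp add: C_def sum_distrib_right mult.assoc)
    finally show ?thesis .
  qed
  show ?thesis
  proof (cases "\<alpha> \<in> Dset n d")
    case False
    then have "\<alpha> \<notin> Poly_Mapping.keys G" using keys_subst_D[OF iv deg] unfolding G_def by blast
    then show ?thesis by (simp add: G_def in_keys_iff)
  next
    case True
    have mu0: "\<mu> \<ge> 0" using small C0 C_def by simp
    have "Poly_Mapping.lookup G' \<alpha> = eval F p * Poly_Mapping.lookup (sv n ^ d) \<alpha>"
      unfolding G'_def subst_rank1[OF deg] by (rule lookup_single0_mult)
    also have "\<dots> \<ge> \<mu> * 1"
      using lookup_sv_power[OF True] mu mu0 by (intro mult_mono) auto
    finally have g': "Poly_Mapping.lookup G' \<alpha> \<ge> \<mu>" by simp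
    have "\<bar>Poly_Mapping.lookup G \<alpha> - Poly_Mapping.lookup G' \<alpha>\<bar> \<le> C"
      using lookup_le_norm1[of "G - G'" \<alpha>] nG by (simp add: lookup_minus)
    then have "Poly_Mapping.lookup G \<alpha> \<ge> 0" using g' small unfolding C_def by linarith
    then show ?thesis by (simp add: G_def)
  qed
qed



lemma min_pos:
  assumes n1: "n \<ge> 1" and pos: "\<forall>x. (\<forall>i<n. x i \<ge> 0) \<and> (\<Sum>i<n. x i) = 1 \<longrightarrow> eval F x > 0"
  shows "\<exists>\<mu>>0. \<forall>x. (\<forall>i<n. 0 \<le> x i) \<and> (\<forall>i. n \<le> i \<longrightarrow> x i = 0) \<and> (\<Sum>i<n. x i) = 1 \<longrightarrow> eval F x \<ge> \<mu>"
proof -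
  define S where "S = (\<lambda>i::nat. if i < n then {0..1::real} else {0})"
  define K where "K = Pi UNIV S \<inter> {x. (\<Sum>i<n. x i) = 1}"
  have "compactin (product_topology (\<lambda>_. euclidean) UNIV) (PiE UNIV S)"
    by (subst compactin_PiE) (auto simp: S_def)
  then have c1: "compact (Pi UNIV S)"
    by (simp add: euclidean_product_topology PiE_UNIV_domain)
  have c2: "closed {x::nat \<Rightarrow> real. (\<Sum>i<n. x i) = 1}"
    by (intro closed_Collect_eq continuous_intros continuous_on_product_coordinates)
  have cK: "compact K" unfolding K_def using c1 c2 by (rule compact_Int_closed)
  have neK: "K \<noteq> {}"
  proof -
    have "(\<lambda>i. if i = 0 then 1 else 0::real) \<in> K" using n1 by (auto simp: K_def S_def)
    then show ?thesis by blast
  qed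
  have cont: "continuous_on K (eval F)"
    unfolding eval_def
    by (rule continuous_on_subset[OF _ subset_UNIV], intro continuous_intros continuous_on_product_coordinates)
  obtain x0 where x0: "x0 \<in> K" "\<And>y. y \<in> K \<Longrightarrow> eval F x0 \<le> eval F y"
    using continuous_attains_inf[OF cK neK cont] by blast
  have "eval F x0 > 0"
    using pos x0(1) by (auto simp: K_def S_def Pi_def split: if_splits)
  moreover have "eval F x \<ge> eval F x0" if "(\<forall>i<n. 0 \<le> x i) \<and> (\<forall>i. n \<le> i \<longrightarrow> x i = 0) \<and> (\<Sum>i<n. x i) = 1" for x
  proof -
    have "x i \<le> 1" if "i < n" for i
    proof -
      have "x i \<le> (\<Sum>i<n. x i)" using \<open>i < n\<close> that
        using \<open>(\<forall>i<n. 0 \<le> x i) \<and> _\<close> by (intro member_le_sum) auto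
      then show ?thesis using \<open>(\<forall>i<n. 0 \<le> x i) \<and> _\<close> by simp
    qed
    then have "x \<in> K" using that by (auto simp: K_def S_def Pi_def)
    then show ?thesis by (rule x0(2))
  qed
  ultimately show ?thesis by blast
qed


theorem theorem4p1:
  fixes n :: nat and F :: mpoly
  assumes "n \<ge> 1"
    and "in_vars n F"
    and "is_form F"
    and "\<forall>x. (\<forall>i<n. x i \<ge> 0) \<and> (\<Sum>i<n. x i) = 1 \<longrightarrow> eval F x > 0"
  shows "\<exists>k>0. \<forall>G\<in>SDS n k F. \<forall>m. coeff G m \<ge> 0"
proof -
  note n1 = assms(1) and iv = assms(2)
  obtain d where deg: "\<forall>\<beta>\<in>Poly_Mapping.keys F. mdeg \<beta> = d"
    using assms(3) unfolding is_form_def by blast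
  obtain \<mu> where mu0: "\<mu> > 0" and mu: "\<And>x. (\<forall>i<n. 0 \<le> x i) \<and> (\<forall>i. n \<le> i \<longrightarrow> x i = 0) \<and> (\<Sum>i<n. x i) = 1 \<Longrightarrow> eval F x \<ge> \<mu>"
    using min_pos[OF n1 assms(4)] by blast
  define C where "C = (\<Sum>\<beta>\<in>Poly_Mapping.keys F. \<bar>Poly_Mapping.lookup F \<beta>\<bar>) * (real d * real n ^ d) * (real n * 2)"
  have C0: "C \<ge> 0" unfolding C_def by (intro mult_nonneg_nonneg sum_nonneg) auto
  define q where "q = 1 - 1 / real n"
  have q0: "q \<ge> 0" "q < 1" using n1 by (auto simp: q_def)
  obtain m where qm: "q ^ m < \<mu> / (C + 1)"
    using real_arch_pow_inv[of "\<mu> / (C + 1)" q] mu0 C0 q0 by auto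
  have small: "C * q ^ Suc m \<le> \<mu>"
  proof -
    have "q ^ Suc m \<le> q ^ m" by (rule power_decreasing) (use q0 in auto)
    then have "C * q ^ Suc m \<le> C * q ^ m"
      using C0 by (rule mult_left_mono)
    also have "\<dots> \<le> C * (\<mu> / (C + 1))" using qm C0 by (intro mult_left_mono) auto
    also have "\<dots> \<le> \<mu>" using C0 mu0 by (simp add: field_simps)
    finally show ?thesis .
  qed
  have "\<forall>G\<in>SDS n (Suc m) F. \<forall>\<alpha>. coeff G \<alpha> \<ge> 0"
  proof (intro ballI allI)
    fix G \<alpha> assume "G \<in> SDS n (Suc m) F"
    then obtain Bs where Bs: "length Bs = Suc m" "\<forall>B\<in>set Bs. B \<in> PW n"
      and G: "G = subst F (lin_subst n (mprod_list n Bs))"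
      unfolding SDS_def by blast
    define M where "M = mprod_list n Bs"
    have MP: "(\<forall>i<n. \<forall>j<n. M i j \<ge> 0) \<and> (\<forall>j<n. (\<Sum>i<n. M i j) = 1)
     \<and> (\<forall>j<n. \<forall>j'<n. (\<Sum>i<n. \<bar>M i j - M i j'\<bar>) \<le> 2 * q ^ Suc m)"
      using prod_props[OF Bs(2) n1] Bs(1) by (simp add: M_def q_def)
    have Mle1: "M i j \<le> 1" if "i < n" "j < n" for i j
    proof -
      have "M i j \<le> (\<Sum>i<n. M i j)" using MP that by (intro member_le_sum) auto
      then show ?thesis using MP that by simp
    qed
    define p where "p i = (if i < n then M i 0 else 0)" for i
    have n0: "0 < n" using n1 by simp
    have M01: "\<forall>i<n. \<forall>j<n. 0 \<le> M i j \<and> M i j \<le> 1" using MP Mle1 by blast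
    have p01: "\<forall>i<n. 0 \<le> p i \<and> p i \<le> 1" using M01 n0 by (simp add: p_def)
    have Mp: "\<forall>i<n. \<forall>j<n. \<bar>M i j - p i\<bar> \<le> 2 * q ^ Suc m"
    proof (intro allI impI)
      fix i j assume ij: "i < n" "j < n"
      have "\<bar>M i j - M i 0\<bar> \<le> (\<Sum>i<n. \<bar>M i j - M i 0\<bar>)"
        using ij by (intro member_le_sum) auto
      also have "\<dots> \<le> 2 * q ^ Suc m" using MP ij n0 by blast
      finally show "\<bar>M i j - p i\<bar> \<le> 2 * q ^ Suc m" using ij by (simp add: p_def)
    qed
    have pmu: "eval F p \<ge> \<mu>"
    proof (rule mu)
      have "(\<Sum>i<n. p i) = (\<Sum>i<n. M i 0)" by (simp add: p_def)
      also have "\<dots> = 1" using MP n0 by blast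
      finally show "(\<forall>i<n. 0 \<le> p i) \<and> (\<forall>i. n \<le> i \<longrightarrow> p i = 0) \<and> (\<Sum>i<n. p i) = 1"
        using p01 by (simp add: p_def)
    qed
    have sm: "(\<Sum>\<beta>\<in>Poly_Mapping.keys F. \<bar>Poly_Mapping.lookup F \<beta>\<bar>) * (real d * real n ^ d) * (real n * (2 * q ^ Suc m)) \<le> \<mu>"
      using small by (simp add: C_def mult.assoc mult.left_commute)
    show "coeff G \<alpha> \<ge> 0"
      unfolding coeff_def G M_def[symmetric]
      by (rule main_poly[OF iv deg n1 M01 p01 Mp pmu sm])
  qed
  then show ?thesis by blast
qed

end
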